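(* (1) Let $R$ be a $\delta$-$\mathbb{Z}_{(p)}$-algebra and $t_1,t_2,\tau_{12}\in R$ with $\delta(t_1)=\delta(t_2)=0$ and $p\tau_{12}=t_2-t_1$. Put $\tau_{21}=-\tau_{12}$ and, for $(i,j)\in\{(1,2),(2,1)\}$, $\sigma_{ij}=(1-p^{p-1})^{-1}\big(-\delta(\tau_{ij})+\sum_{\nu=1}^{p-1}\frac1p\binom p\nu t_i^{p-\nu}p^{\nu-1}\tau_{ij}^\nu\big)$ (which satisfies $\tau_{ij}^p=p\sigma_{ij}$). Then $\sigma_{21}=(-1)^p\sigma_{12}$. (2) Let $R$ be a $\delta$-$\mathbb{Z}_{(p)}$-algebra and $t_1,t_2,t_3,\tau_{12},\tau_{13}\in R$ with $\delta(t_i)=0$ ($i=1,2,3$), $p\tau_{12}=t_2-t_1$, $p\tau_{13}=t_3-t_1$. Put $\tau_{23}=\tau_{13}-\tau_{12}$ and for $(i,j)\in\{(1,2),(1,3),(2,3)\}$ define $\sigma_{ij}=(1-p^{p-1})^{-1}\big(-\delta(\tau_{ij})+\sum_{\nu=1}^{p-1}\frac1p\binom p\nu t_i^{p-\nu}p^{\nu-1}\tau_{ij}^\nu\big)$. Then $$\sigma_{23}=\sigma_{13}+(-1)^p\sigma_{12}+\sum_{\nu=1}^{p-1}\frac1p\binom p\nu\tau_{13}^\nu(-\tau_{12})^{p-\nu}.$$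
   Context: $p$ a fixed prime; a $\delta$-ring is a commutative ring with $\delta$ satisfying $\delta(0)=\delta(1)=0$, $\delta(x+y)=\delta(x)+\delta(y)-\sum_{i=1}^{p-1}\frac1p\binom pi x^iy^{p-i}$, $\delta(xy)=\delta(x)y^p+x^p\delta(y)+p\delta(x)\delta(y)$. A $\delta$-$\mathbb{Z}_{(p)}$-algebra is a $\delta$-ring that is a $\mathbb{Z}_{(p)}$-algebra (with the unique $\delta$-structure on $\mathbb{Z}_{(p)}$). *)

theory Defs
  imports "HOL-Computational_Algebra.Primes"
begin

text \<open>Binomial quotient (1/p) * binom(p,i), an integer for prime p and 1 \<le> i \<le> p-1.\<close>

definition delta_ring :: "nat \<Rightarrow> ('a::comm_ring_1 \<Rightarrow> 'a) \<Rightarrow> bool" where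
  "delta_ring p \<delta> \<longleftrightarrow>
     \<delta> 0 = 0 \<and> \<delta> 1 = 0 \<and>
     (\<forall>x y. \<delta> (x + y) = \<delta> x + \<delta> y
        - (\<Sum>i=1..p-1. of_nat ((p choose i) div p) * x ^ i * y ^ (p - i))) \<and>
     (\<forall>x y. \<delta> (x * y) = \<delta> x * y ^ p + x ^ p * \<delta> y + of_nat p * \<delta> x * \<delta> y)"

definition zp_algebra :: "nat \<Rightarrow> 'a::comm_ring_1 itself \<Rightarrow> bool" where
  "zp_algebra p _ \<longleftrightarrow> (\<forall>n::int. coprime n (int p) \<longrightarrow> (of_int n :: 'a) dvd 1)"

definition delta_zp_algebra :: "nat \<Rightarrow> ('a::comm_ring_1 \<Rightarrow> 'a) \<Rightarrow> bool" where
  "delta_zp_algebra p \<delta> \<longleftrightarrow> delta_ring p \<delta> \<and> zp_algebra p TYPE('a)"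

definition sigma :: "nat \<Rightarrow> ('a::comm_ring_1 \<Rightarrow> 'a) \<Rightarrow> 'a \<Rightarrow> 'a \<Rightarrow> 'a" where
  "sigma p \<delta> t \<tau> = (THE s. (1 - of_nat p ^ (p - 1)) * s =
      - \<delta> \<tau> + (\<Sum>\<nu>=1..p-1. of_nat ((p choose \<nu>) div p) * t ^ (p - \<nu>)
                        * of_nat p ^ (\<nu> - 1) * \<tau> ^ \<nu>))"

end

theory Submission
  imports Defs "HOL-Computational_Algebra.Polynomial"
begin

definition Cp :: "nat \<Rightarrow> 'a::comm_ring_1 \<Rightarrow> 'a \<Rightarrow> 'a" where
  "Cp p x y = (\<Sum>i=1..p-1. of_nat ((p choose i) div p) * x ^ i * y ^ (p - i))"
definition Sp :: "nat \<Rightarrow> 'a::comm_ring_1 \<Rightarrow> 'a \<Rightarrow> 'a" where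
  "Sp p t \<tau> = (\<Sum>\<nu>=1..p-1. of_nat ((p choose \<nu>) div p) * t ^ (p - \<nu>) * of_nat p ^ (\<nu> - 1) * \<tau> ^ \<nu>)"

lemma Cp_mul:
  assumes "prime p"
  shows "of_nat p * Cp p x y = (x + y) ^ p - x ^ p - (y::'a::comm_ring_1) ^ p"
proof -
  have p0: "p > 0" using assms prime_gt_0_nat by blast
  have "(x + y) ^ p = (\<Sum>k\<le>p. of_nat (p choose k) * x ^ k * y ^ (p - k))"
    by (rule binomial_ring)
  also have "{..p} = insert 0 (insert p {1..p-1})" using p0 by auto
  also have "(\<Sum>k\<in>insert 0 (insert p {1..p-1}). of_nat (p choose k) * x ^ k * y ^ (p - k))
      = y ^ p + (x ^ p + (\<Sum>k=1..p-1. of_nat (p choose k) * x ^ k * y ^ (p - k)))"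
    using p0 by (subst sum.insert; simp)+
  also have "(\<Sum>k=1..p-1. of_nat (p choose k) * x ^ k * y ^ (p - k)) = of_nat p * Cp p x y"
    unfolding Cp_def sum_distrib_left
  proof (rule sum.cong)
    fix k assume k: "k \<in> {1..p-1}"
    have "p dvd (p choose k)" using k p0 assms by (intro dvd_choose_prime) auto
    then have "p * ((p choose k) div p) = p choose k" by simp
    then have "of_nat (p choose k) = (of_nat p * of_nat ((p choose k) div p) :: 'a)"
      by (metis of_nat_mult)
    then show "of_nat (p choose k) * x ^ k * y ^ (p - k) =
      of_nat p * (of_nat ((p choose k) div p) * x ^ k * y ^ (p - k))" by (simp add: mult.assoc)
  qed simp
  finally show ?thesis by (simp add: algebra_simps)
qed

lemma Sp_mul:
  "of_nat p * Sp p t \<tau> = Cp p (of_nat p * \<tau>) (t::'a::comm_ring_1)"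
  unfolding Sp_def Cp_def sum_distrib_left
proof (rule sum.cong)
  fix k assume k: "k \<in> {1..p-1}"
  then have e: "(of_nat p::'a) ^ k = of_nat p * of_nat p ^ (k - 1)"
    by (metis Suc_diff_le atLeastAtMost_iff diff_Suc_1 le_add_diff_inverse2 power_Suc plus_1_eq_Suc)
  then show "of_nat p * (of_nat ((p choose k) div p) * t ^ (p - k) * of_nat p ^ (k - 1) * \<tau> ^ k) =
         of_nat ((p choose k) div p) * (of_nat p * \<tau>) ^ k * t ^ (p - k)"
    by (simp only: power_mult_distrib e) (simp add: mult_ac)
qed simp

definition is_hom :: "('a::comm_ring_1 \<Rightarrow> 'b::comm_ring_1) \<Rightarrow> bool" where
  "is_hom h \<longleftrightarrow> h 1 = 1 \<and> (\<forall>x y. h (x + y) = h x + h y) \<and> (\<forall>x y. h (x * y) = h x * h y)"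

lemma hom_0: "is_hom h \<Longrightarrow> h 0 = 0"
  unfolding is_hom_def by (metis add_0 add_cancel_right_right)
lemma hom_1: "is_hom h \<Longrightarrow> h 1 = 1"
  unfolding is_hom_def by blast
lemma hom_add: "is_hom h \<Longrightarrow> h (x + y) = h x + h y"
  unfolding is_hom_def by blast
lemma hom_mult: "is_hom h \<Longrightarrow> h (x * y) = h x * h y"
  unfolding is_hom_def by blast
lemma hom_uminus: "is_hom h \<Longrightarrow> h (- x) = - h x"
  by (metis add.right_inverse add_eq_0_iff hom_0 hom_add)
lemma hom_diff: "is_hom h \<Longrightarrow> h (x - y) = h x - h y"
  by (metis diff_conv_add_uminus hom_add hom_uminus)
lemma hom_of_nat: "is_hom h \<Longrightarrow> h (of_nat n) = of_nat n"
  by (induction n) (simp_all add: hom_0 hom_1 hom_add)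
lemma hom_power: "is_hom h \<Longrightarrow> h (x ^ n) = h x ^ n"
  by (induction n) (simp_all add: hom_1 hom_mult)
lemma hom_sum: "is_hom h \<Longrightarrow> h (sum f A) = (\<Sum>i\<in>A. h (f i))"
  by (induction A rule: infinite_finite_induct) (simp_all add: hom_0 hom_add)

lemmas hom_simps = hom_0 hom_1 hom_add hom_mult hom_uminus hom_diff hom_of_nat hom_power hom_sum

lemma hom_Cp: "is_hom h \<Longrightarrow> h (Cp p x y) = Cp p (h x) (h y)"
  unfolding Cp_def by (simp add: hom_simps)
lemma hom_Sp: "is_hom h \<Longrightarrow> h (Sp p x y) = Sp p (h x) (h y)"
  unfolding Sp_def by (simp add: hom_simps)

lemma of_int_hom: "is_hom of_int"
  unfolding is_hom_def by simp

lemma poly_hom: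
  assumes h: "is_hom h"
  shows "is_hom (\<lambda>P. poly (map_poly h P) c)"
proof -
  have add: "map_poly h (P + Q) = map_poly h P + map_poly h Q" for P Q
    by (intro poly_eqI) (simp add: coeff_map_poly hom_0[OF h] hom_add[OF h])
  have sm: "map_poly h (smult a Q) = smult (h a) (map_poly h Q)" for a Q
    by (rule map_poly_smult) (simp_all add: hom_0[OF h] hom_mult[OF h])
  have pc: "map_poly h (pCons a Q) = pCons (h a) (map_poly h Q)" for a Q
    by (rule map_poly_pCons) (simp add: hom_0[OF h])
  have mult: "poly (map_poly h (P * Q)) c = poly (map_poly h P) c * poly (map_poly h Q) c" for P Q
  proof (induction P)
    case 0
    then show ?case by simp
  next
    case (pCons a P)
    have "pCons a P * Q = smult a Q + pCons 0 (P * Q)" by (rule mult_pCons_left)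
    then show ?case using pCons.IH
      by (simp add: add sm pc hom_0[OF h] algebra_simps)
  qed
  show ?thesis unfolding is_hom_def
    by (simp add: add mult hom_1[OF h])
qed

definition G :: "nat \<Rightarrow> 'a::comm_ring_1 \<Rightarrow> 'a \<Rightarrow> 'a \<Rightarrow> 'a" where
  "G p x a b = - Cp p 1 (-1) * (Cp p (of_nat p * a) x - (1 - of_nat p ^ (p - 1)) * a ^ p)
     - Cp p a (-a) + of_nat p ^ (p - 1) * Cp p b (-a) + Sp p (x + of_nat p * a) (b - a)
     - Sp p x b - (-1) ^ p * Sp p x a"

lemma hom_G: "is_hom h \<Longrightarrow> h (G p x a b) = G p (h x) (h a) (h b)"
  unfolding G_def by (simp add: hom_simps hom_Cp hom_Sp)


lemma G_char0:
  assumes "prime p"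
  shows "G p x a b = (0::'b::{idom,ring_char_0})"
proof -
  define P where "P = (of_nat p :: 'b)"
  have hP: "of_nat p = P" by (simp add: P_def)
  have p0: "p > 0" using assms prime_gt_0_nat by blast
  have P0: "P \<noteq> 0" using p0 by (simp add: P_def)
  have k: "P * Cp p 1 (-1) = -1 - (-1)^p"
    using Cp_mul[OF assms, of "1::'b" "-1", unfolded hP] p0 by simp
  have c1: "P * Cp p (P*a) x = (P*a+x)^p - P^p*a^p - x^p"
    using Cp_mul[OF assms, of "P*a" x, unfolded hP power_mult_distrib] .
  have c2: "P * Cp p a (-a) = -(a^p) - (-1)^p*a^p"
    using Cp_mul[OF assms, of a "-a", unfolded hP power_minus[of a]] p0 by simp
  have c3: "P * Cp p b (-a) = (b-a)^p - b^p - (-1)^p*a^p"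
    using Cp_mul[OF assms, of b "-a", unfolded hP power_minus[of a]] by simp
  have e1: "P*(b-a) + (x+P*a) = P*b + x" by (simp add: algebra_simps)
  have s1: "P * (P * Sp p (x+P*a) (b-a)) = (P*b + x)^p - P^p*(b-a)^p - (x+P*a)^p"
    using Cp_mul[OF assms, of "P*(b-a)" "x+P*a", unfolded hP power_mult_distrib e1]
      Sp_mul[of p "x+P*a" "b-a", unfolded hP] by simp
  have s2: "P * (P * Sp p x b) = (P*b + x)^p - P^p*b^p - x^p"
    using Cp_mul[OF assms, of "P*b" x, unfolded hP power_mult_distrib]
      Sp_mul[of p x b, unfolded hP] by simp
  have s3: "P * (P * Sp p x a) = (P*a + x)^p - P^p*a^p - x^p"
    using Cp_mul[OF assms, of "P*a" x, unfolded hP power_mult_distrib]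
      Sp_mul[of p x a, unfolded hP] by simp
  have xa: "(x+P*a)^p = (P*a+x)^p" by (simp add: add.commute)
  have q: "P^p = P^(p-1)*P" using p0 by (metis Suc_diff_1 power_Suc2)
  have "P * (P * G p x a b) = -(P * Cp p 1 (-1)) * (P * Cp p (P*a) x)
     + (P * Cp p 1 (-1)) * (1 - P^(p-1)) * P * a^p - P * (P * Cp p a (-a))
     + P^(p-1) * P * (P * Cp p b (-a)) + P * (P * Sp p (x+P*a) (b-a))
     - P * (P * Sp p x b) - (-1)^p * (P * (P * Sp p x a))"
    unfolding G_def hP by algebra
  also have "\<dots> = 0"
    unfolding k c1 c2 c3 s1 s2 s3 q xa by algebra
  finally have "P * (P * G p x a b) = 0" .
  then show ?thesis using P0 by simp
qed


lemma G_zero: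
  assumes "prime p"
  shows "G p x a b = (0::'a::comm_ring_1)"
proof -
  define h1 where "h1 = (\<lambda>r::int poly. poly (map_poly of_int r) x)"
  define h2 where "h2 = (\<lambda>Q::int poly poly. poly (map_poly h1 Q) a)"
  define h3 where "h3 = (\<lambda>Q::int poly poly poly. poly (map_poly h2 Q) b)"
  have H1: "is_hom h1" unfolding h1_def by (rule poly_hom[OF of_int_hom])
  have H2: "is_hom h2" unfolding h2_def by (rule poly_hom[OF H1])
  have H3: "is_hom h3" unfolding h3_def by (rule poly_hom[OF H2])
  have z1: "h1 0 = 0" "h2 0 = 0" using hom_0[OF H1] hom_0[OF H2] by auto
  have ex: "h3 [:[:[:0,1:]:]:] = x" using z1 hom_1[OF H1] by (simp add: h3_def h2_def h1_def map_poly_pCons)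
  have ea: "h3 [:[:0,1:]:] = a" using z1 hom_1[OF H1] by (simp add: h3_def h2_def map_poly_pCons)
  have eb: "h3 [:0,1:] = b" using z1 hom_1[OF H2] by (simp add: h3_def map_poly_pCons)
  have "G p x a b = h3 (G p [:[:[:0,1:]:]:] [:[:0,1:]:] [:0,1:])"
    by (simp add: hom_G[OF H3] ex ea eb)
  also have "\<dots> = 0" by (simp add: G_char0[OF assms] hom_0[OF H3])
  finally show ?thesis .
qed


fun dn :: "nat \<Rightarrow> nat \<Rightarrow> int" where
  "dn p 0 = 0"
| "dn p (Suc n) = dn p n - Cp p (int n) 1"

lemma delta_add:
  assumes "delta_ring p \<delta>"
  shows "\<delta> (x + y) = \<delta> x + \<delta> y - Cp p x y"
  using assms unfolding delta_ring_def Cp_def by blast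

lemma delta_mult:
  assumes "delta_ring p \<delta>"
  shows "\<delta> (x * y) = \<delta> x * y ^ p + x ^ p * \<delta> y + of_nat p * \<delta> x * \<delta> y"
  using assms unfolding delta_ring_def by blast

lemma delta_of_nat:
  assumes "delta_ring p \<delta>"
  shows "\<delta> (of_nat n) = of_int (dn p n)"
proof (induction n)
  case 0
  then show ?case using assms by (simp add: delta_ring_def)
next
  case (Suc n)
  have "\<delta> (of_nat (Suc n)) = \<delta> (of_nat n + 1)" by (simp add: add.commute)
  also have "\<dots> = \<delta> (of_nat n) + \<delta> 1 - Cp p (of_nat n) 1" by (rule delta_add[OF assms])
  also have "\<delta> 1 = 0" using assms by (simp add: delta_ring_def)
  also have "Cp p (of_nat n) 1 = (of_int (Cp p (int n) 1) :: 'a)"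
  proof -
    have hh: "is_hom (of_int :: int \<Rightarrow> 'a)" by (rule of_int_hom)
    show ?thesis using hom_Cp[OF hh, of p "int n" 1] by simp
  qed
  finally show ?case using Suc by simp
qed

lemma dn_mul:
  assumes "prime p"
  shows "int p * dn p n = int n - int n ^ p"
proof (induction n)
  case 0
  then show ?case using assms prime_gt_0_nat by simp
next
  case (Suc n)
  have "int p * Cp p (int n) 1 = (int n + 1) ^ p - int n ^ p - 1"
    using Cp_mul[OF assms, of "int n" 1] by simp
  have e: "int (Suc n) = int n + 1" by simp
  have "int p * dn p (Suc n) = int p * dn p n - int p * Cp p (int n) 1"
    by (simp add: right_diff_distrib)
  also have "\<dots> = (int n - int n ^ p) - ((int n + 1) ^ p - int n ^ p - 1)"
    using Suc \<open>int p * Cp p (int n) 1 = _\<close> by simp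
  also have "\<dots> = int (Suc n) - int (Suc n) ^ p" unfolding e by simp
  finally show ?case .
qed

lemma dn_p:
  assumes "prime p"
  shows "dn p p = 1 - int p ^ (p - 1)"
proof -
  have p0: "p > 0" using assms prime_gt_0_nat by blast
  have pp: "int p ^ p = int p * int p ^ (p - 1)" using p0 by (metis Suc_diff_1 power_Suc)
  have "int p * dn p p = int p * (1 - int p ^ (p - 1))"
    using dn_mul[OF assms, of p] unfolding pp by (simp add: right_diff_distrib)
  then show ?thesis using p0 by simp
qed

lemma delta_p:
  assumes "prime p" "delta_ring p \<delta>"
  shows "\<delta> (of_nat p) = 1 - of_nat p ^ (p - 1)"
  using delta_of_nat[OF assms(2), of p] dn_p[OF assms(1)] by simp

lemma unit_u:
  assumes "prime p" "zp_algebra p TYPE('a::comm_ring_1)"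
  shows "(1 - of_nat p ^ (p - 1) :: 'a) dvd 1"
proof -
  have p1: "p - 1 > 0" using assms prime_gt_1_nat by (simp add: prime_gt_Suc_0_nat)
  have "coprime (1 - int p ^ (p - 1)) (int p)"
  proof (rule coprimeI)
    fix d assume d1: "d dvd 1 - int p ^ (p - 1)" and d2: "d dvd int p"
    have "d dvd int p ^ (p - 1)" using d2 p1 by (meson dvd_power dvd_trans)
    then have "d dvd (1 - int p ^ (p - 1)) + int p ^ (p - 1)" using d1 by (rule dvd_add[rotated])
    then show "is_unit d" by simp
  qed
  then have "(of_int (1 - int p ^ (p - 1)) :: 'a) dvd 1"
    using assms(2) unfolding zp_algebra_def by blast
  then show ?thesis by simp
qed


lemma u_cancel:
  assumes "(u::'a::comm_ring_1) dvd 1" "u * x = u * y"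
  shows "x = y"
proof -
  obtain v where v: "1 = u * v" using assms(1) by (auto simp: dvd_def)
  have "x = (u * v) * x" using v by simp
  also have "\<dots> = v * (u * x)" by (simp add: ac_simps)
  also have "\<dots> = v * (u * y)" using assms(2) by simp
  also have "\<dots> = (u * v) * y" by (simp add: ac_simps)
  finally show ?thesis using v by simp
qed

lemma sigma_char:
  assumes "(1 - of_nat p ^ (p - 1) :: 'a::comm_ring_1) dvd 1"
  shows "(1 - of_nat p ^ (p - 1)) * sigma p \<delta> t \<tau> = - \<delta> \<tau> + Sp p t (\<tau>::'a)"
proof -
  define u where "u = (1 - of_nat p ^ (p - 1) :: 'a)"
  define r where "r = - \<delta> \<tau> + Sp p t \<tau>"
  obtain v where v: "1 = u * v" using assms by (auto simp: dvd_def u_def)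
  have ex: "\<exists>!s. u * s = r"
  proof
    show "u * (v * r) = r" using v by (simp add: mult.assoc[symmetric])
  next
    fix s assume "u * s = r"
    then show "s = v * r" using u_cancel[of u s "v * r"] assms v
      by (simp add: u_def mult.assoc[symmetric])
  qed
  have "sigma p \<delta> t \<tau> = (THE s. u * s = r)"
    unfolding sigma_def u_def r_def Sp_def by simp
  then show ?thesis using theI'[OF ex] by (simp add: u_def r_def)
qed

lemma delta_neg:
  assumes "delta_ring p \<delta>"
  shows "\<delta> (- a) = - \<delta> a + Cp p a (- a)"
proof -
  have "\<delta> (a + - a) = \<delta> a + \<delta> (- a) - Cp p a (- a)" by (rule delta_add[OF assms])
  moreover have "\<delta> (a + - a) = 0" using assms by (simp add: delta_ring_def)
  ultimately show ?thesis by (simp add: algebra_simps)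
qed

lemma delta_rel:
  assumes "prime p" "delta_ring p \<delta>" "\<delta> t = 0" "\<delta> t' = 0" "of_nat p * \<tau> = t' - t"
  shows "of_nat p * \<delta> \<tau> = Cp p (of_nat p * \<tau>) t - (1 - of_nat p ^ (p - 1)) * \<tau> ^ p"
proof -
  have p0: "p > 0" using assms prime_gt_0_nat by blast
  have tt: "t' = of_nat p * \<tau> + t" using assms(5) by (simp add: algebra_simps)
  have "0 = \<delta> (of_nat p * \<tau> + t)" using assms(4) tt by simp
  also have "\<dots> = \<delta> (of_nat p * \<tau>) + \<delta> t - Cp p (of_nat p * \<tau>) t" by (rule delta_add[OF assms(2)])
  finally have A: "0 = \<delta> (of_nat p * \<tau>) - Cp p (of_nat p * \<tau>) t" using assms(3) by simp
  have B: "\<delta> (of_nat p * \<tau>) = (1 - of_nat p ^ (p - 1)) * \<tau> ^ p + of_nat p ^ p * \<delta> \<tau>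
      + of_nat p * (1 - of_nat p ^ (p - 1)) * \<delta> \<tau>"
    using delta_mult[OF assms(2), of "of_nat p" \<tau>] delta_p[OF assms(1,2)] by simp
  have q: "(of_nat p :: 'a) ^ p = of_nat p ^ (p - 1) * of_nat p" using p0 by (metis Suc_diff_1 power_Suc2)
  define P where "P = (of_nat p :: 'a)"
  define D where "D = \<delta> (of_nat p * \<tau>)"
  define C where "C = Cp p (of_nat p * \<tau>) t"
  have A': "0 = D - C" using A by (simp add: D_def C_def)
  have B': "D = (1 - P ^ (p - 1)) * \<tau> ^ p + P ^ (p - 1) * P * \<delta> \<tau> + P * (1 - P ^ (p - 1)) * \<delta> \<tau>"
    using B unfolding q by (simp add: D_def P_def)
  have C': "C = (1 - P ^ (p - 1)) * \<tau> ^ p + P ^ (p - 1) * P * \<delta> \<tau> + P * (1 - P ^ (p - 1)) * \<delta> \<tau>"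
    using A' B' by simp
  have "P * \<delta> \<tau> = C - (1 - P ^ (p - 1)) * \<tau> ^ p" unfolding C' by (simp add: algebra_simps)
  then show ?thesis by (simp add: P_def C_def)
qed

lemma part2:
  assumes "prime p" "delta_zp_algebra p \<delta>" "\<delta> t1 = 0" "\<delta> t2 = 0" "\<delta> t3 = 0"
    "of_nat p * a = t2 - t1" "of_nat p * b = t3 - t1"
  shows "sigma p \<delta> t2 (b - a) = sigma p \<delta> t1 b + (-1) ^ p * sigma p \<delta> t1 a + Cp p b (- a)"
proof -
  have dr: "delta_ring p \<delta>" and zp: "zp_algebra p TYPE('a)"
    using assms(2) unfolding delta_zp_algebra_def by auto
  have p0: "p > 0" using assms prime_gt_0_nat by blast
  have U: "(1 - of_nat p ^ (p - 1) :: 'a) dvd 1" by (rule unit_u[OF assms(1) zp])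
  have t2: "t2 = t1 + of_nat p * a" using assms(6) by (simp add: algebra_simps)
  have e1: "(1 - of_nat p ^ (p - 1)) * sigma p \<delta> t2 (b - a) = - \<delta> (b - a) + Sp p (t1 + of_nat p * a) (b - a)"
    using sigma_char[OF U, of \<delta> t2 "b - a"] t2 by simp
  have e2: "(1 - of_nat p ^ (p - 1)) * sigma p \<delta> t1 b = - \<delta> b + Sp p t1 b"
    by (rule sigma_char[OF U])
  have e3: "(1 - of_nat p ^ (p - 1)) * sigma p \<delta> t1 a = - \<delta> a + Sp p t1 a"
    by (rule sigma_char[OF U])
  have e4: "\<delta> (b - a) = \<delta> b - \<delta> a + Cp p a (- a) - Cp p b (- a)"
    using delta_add[OF dr, of b "- a"] delta_neg[OF dr, of a] by simp
  have e5: "of_nat p * \<delta> a = Cp p (of_nat p * a) t1 - (1 - of_nat p ^ (p - 1)) * a ^ p"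
    by (rule delta_rel[OF assms(1) dr assms(3,4,6)])
  have e6: "of_nat p * Cp p 1 (-1) = -1 - (-1 :: 'a) ^ p"
    using Cp_mul[OF assms(1), of "1::'a" "-1"] p0 by (simp add: power_0_left)
  have g: "G p t1 a b = 0" by (rule G_zero[OF assms(1)])
  have "(1 - of_nat p ^ (p - 1)) * sigma p \<delta> t2 (b - a)
      = (1 - of_nat p ^ (p - 1)) * (sigma p \<delta> t1 b + (-1) ^ p * sigma p \<delta> t1 a + Cp p b (- a))"
  proof -
    define P where "P = (of_nat p :: 'a)"
    define u where "u = (1 - P ^ (p - 1))"
    define s where "s = ((-1) ^ p :: 'a)"
    define k where "k = Cp p 1 (-1::'a)"
    note E = e1[folded P_def, folded u_def] e2[folded P_def, folded u_def] e3[folded P_def, folded u_def]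
       e5[folded P_def, folded u_def] e6[folded P_def, folded s_def k_def]
    have gg: "- k * (Cp p (P * a) t1 - u * a ^ p) - Cp p a (- a) + P ^ (p - 1) * Cp p b (- a)
       + Sp p (t1 + P * a) (b - a) - Sp p t1 b - s * Sp p t1 a = 0"
      using g unfolding G_def P_def[symmetric] u_def[symmetric] s_def[symmetric] k_def[symmetric] .
    have h1: "1 + s = - (P * k)" using E(5) by simp
    have h: "(1 + s) * \<delta> a = - k * (Cp p (P * a) t1 - u * a ^ p)"
    proof -
      have "(1 + s) * \<delta> a = - (P * k) * \<delta> a" by (simp only: h1)
      also have "\<dots> = - k * (P * \<delta> a)" by (simp add: algebra_simps)
      also have "\<dots> = - k * (Cp p (P * a) t1 - u * a ^ p)" by (simp only: E(4))
      finally show ?thesis .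
    qed
    have d1: "u * (sigma p \<delta> t1 b + s * sigma p \<delta> t1 a + Cp p b (- a))
        = u * sigma p \<delta> t1 b + s * (u * sigma p \<delta> t1 a) + u * Cp p b (- a)" by (simp add: algebra_simps)
    have "u * sigma p \<delta> t2 (b - a) - u * (sigma p \<delta> t1 b + s * sigma p \<delta> t1 a + Cp p b (- a))
       = (- \<delta> (b - a) + Sp p (t1 + P * a) (b - a)) - ((- \<delta> b + Sp p t1 b) + s * (- \<delta> a + Sp p t1 a)
          + u * Cp p b (- a))"
      unfolding d1 E(1) E(2) E(3) ..
    also have "\<dots> = (1 + s) * \<delta> a - Cp p a (- a) + (1 - u) * Cp p b (- a)
       + Sp p (t1 + P * a) (b - a) - Sp p t1 b - s * Sp p t1 a"
      unfolding e4 by (simp add: algebra_simps)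
    also have "\<dots> = - k * (Cp p (P * a) t1 - u * a ^ p) - Cp p a (- a) + P ^ (p - 1) * Cp p b (- a)
       + Sp p (t1 + P * a) (b - a) - Sp p t1 b - s * Sp p t1 a"
      unfolding h u_def by (simp add: algebra_simps)
    also have "\<dots> = 0" by (rule gg)
    finally show ?thesis unfolding u_def s_def P_def by simp
  qed
  then show ?thesis by (rule u_cancel[OF U])
qed


lemma Cp_zero_left: "Cp p 0 y = (0::'a::comm_ring_1)"
  unfolding Cp_def by (intro sum.neutral) (auto simp: power_0_left)

lemma Sp_zero: "Sp p t 0 = (0::'a::comm_ring_1)"
  unfolding Sp_def by (intro sum.neutral) (auto simp: power_0_left)

theorem proposition3p5:
  fixes p :: nat and \<delta> :: "'a::comm_ring_1 \<Rightarrow> 'a"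
  assumes "prime p"
    and "delta_zp_algebra p \<delta>"
  shows "(\<forall>t1 t2 \<tau>12. \<delta> t1 = 0 \<and> \<delta> t2 = 0 \<and> of_nat p * \<tau>12 = t2 - t1 \<longrightarrow>
            sigma p \<delta> t2 (- \<tau>12) = (-1) ^ p * sigma p \<delta> t1 \<tau>12)
       \<and> (\<forall>t1 t2 t3 \<tau>12 \<tau>13.
            \<delta> t1 = 0 \<and> \<delta> t2 = 0 \<and> \<delta> t3 = 0 \<and>
            of_nat p * \<tau>12 = t2 - t1 \<and> of_nat p * \<tau>13 = t3 - t1 \<longrightarrow>
            sigma p \<delta> t2 (\<tau>13 - \<tau>12) =
              sigma p \<delta> t1 \<tau>13 + (-1) ^ p * sigma p \<delta> t1 \<tau>12
              + (\<Sum>\<nu>=1..p-1. of_nat ((p choose \<nu>) div p) * \<tau>13 ^ \<nu> * (- \<tau>12) ^ (p - \<nu>)))"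
proof (intro conjI allI impI)
  have dr: "delta_ring p \<delta>" and zp: "zp_algebra p TYPE('a)"
    using assms(2) unfolding delta_zp_algebra_def by auto
  have U: "(1 - of_nat p ^ (p - 1) :: 'a) dvd 1" by (rule unit_u[OF assms(1) zp])
  {
    fix t1 t2 \<tau>12 :: 'a
    assume h: "\<delta> t1 = 0 \<and> \<delta> t2 = 0 \<and> of_nat p * \<tau>12 = t2 - t1"
    have A: "sigma p \<delta> t2 (0 - \<tau>12) = sigma p \<delta> t1 0 + (-1) ^ p * sigma p \<delta> t1 \<tau>12 + Cp p 0 (- \<tau>12)"
      by (rule part2[OF assms]) (use h in auto)
    have "(1 - of_nat p ^ (p - 1)) * sigma p \<delta> t1 0 = (1 - of_nat p ^ (p - 1)) * 0"
      using sigma_char[OF U, of \<delta> t1 0] dr by (simp add: Sp_zero delta_ring_def)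
    then have "sigma p \<delta> t1 0 = 0" by (rule u_cancel[OF U])
    then show "sigma p \<delta> t2 (- \<tau>12) = (-1) ^ p * sigma p \<delta> t1 \<tau>12"
      using A by (simp add: Cp_zero_left)
  next
    fix t1 t2 t3 \<tau>12 \<tau>13 :: 'a
    assume h: "\<delta> t1 = 0 \<and> \<delta> t2 = 0 \<and> \<delta> t3 = 0 \<and>
            of_nat p * \<tau>12 = t2 - t1 \<and> of_nat p * \<tau>13 = t3 - t1"
    show "sigma p \<delta> t2 (\<tau>13 - \<tau>12) =
              sigma p \<delta> t1 \<tau>13 + (-1) ^ p * sigma p \<delta> t1 \<tau>12
              + (\<Sum>\<nu>=1..p-1. of_nat ((p choose \<nu>) div p) * \<tau>13 ^ \<nu> * (- \<tau>12) ^ (p - \<nu>))"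
      unfolding Cp_def[symmetric] using h by (intro part2[OF assms]) auto
  }
qed

end
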